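(* Let $\Gamma$ be a Neumaier graph with vertex set $V$ and parameters $(n,k,\lambda;a,c)$. Let $C\subset V$ be a regular clique with nexus $a$, let $e\in C$ be an arbitrary vertex, and let $S$ be the set of neighbours of $e$ in $\Gamma$. Then: (i) The induced subgraph on $S\setminus C$ is regular. Moreover, if the number of neighbours in $S\setminus C$ of a vertex $x\in V\setminus(S\cup\{e\})$ is independent of the choice of $x$, then $\{\{e\},\,C\setminus\{e\},\,S\setminus C,\,V\setminus(S\cup\{e\})\}$ is an equitable partition of $\Gamma$. (ii) If $\Gamma$ is strongly regular, then the number of neighbours in $S\setminus C$ of a vertex $x\in V\setminus(S\cup\{e\})$ is independent of the choice of $x$. (iii) If $\Gamma$ is vertex-transitive, then $\Gamma$ has diameter $2$. Moreover, in this case $\Gamma$ is strongly regular if and only if the number of neighbours in $S\setminus C$ of a vertex $x\in V\setminus(S\cup\{e\})$ is independent of the choice of $x$.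
   Context: All graphs are finite, simple, undirected and connected. A graph is edge-regular with parameters $(n,k,\lambda)$ if it has $n$ vertices, is $k$-regular, and any two adjacent vertices have exactly $\lambda$ common neighbours. A clique $C$ is a regular clique with nexus $a$ if every vertex not in $C$ has exactly $a$ neighbours in $C$. A Neumaier graph is a non-complete edge-regular graph containing a regular clique; in a Neumaier graph all regular cliques have the same size $c$ and nexus $a$, and the graph has parameters $(n,k,\lambda;a,c)$ if it is edge-regular with parameters $(n,k,\lambda)$ and contains a regular clique of size $c$ with nexus $a$. A strongly regular graph with parameters $(n,k,\lambda,\mu)$ is a non-complete connected $k$-regular graph on $n$ vertices in which two adjacent vertices have exactly $\lambda$ common neighbours and two non-adjacent vertices have exactly $\mu$ common neighbours. A partition $\{V_1,\dots,V_m\}$ of the vertex set is equitable if for all $i,j$ the number of neighbours in $V_j$ of a vertex $x\in V_i$ depends only on $i,j$. *)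

theory Defs
  imports "HOL-Library.Disjoint_Sets"
begin

definition graph :: "'a set \<Rightarrow> ('a \<Rightarrow> 'a \<Rightarrow> bool) \<Rightarrow> bool" where
  "graph V E \<longleftrightarrow> finite V \<and> V \<noteq> {} \<and>
     (\<forall>x y. E x y \<longrightarrow> x \<in> V \<and> y \<in> V) \<and>
     (\<forall>x y. E x y \<longrightarrow> E y x) \<and> (\<forall>x. \<not> E x x) \<and>
     (\<forall>x\<in>V. \<forall>y\<in>V. E\<^sup>*\<^sup>* x y)"

definition nbrs :: "'a set \<Rightarrow> ('a \<Rightarrow> 'a \<Rightarrow> bool) \<Rightarrow> 'a \<Rightarrow> 'a set" where
  "nbrs V E x = {y \<in> V. E x y}"

definition complete_graph :: "'a set \<Rightarrow> ('a \<Rightarrow> 'a \<Rightarrow> bool) \<Rightarrow> bool" where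
  "complete_graph V E \<longleftrightarrow> (\<forall>x\<in>V. \<forall>y\<in>V. x \<noteq> y \<longrightarrow> E x y)"

definition regular_graph :: "'a set \<Rightarrow> ('a \<Rightarrow> 'a \<Rightarrow> bool) \<Rightarrow> nat \<Rightarrow> bool" where
  "regular_graph V E k \<longleftrightarrow> (\<forall>x\<in>V. card (nbrs V E x) = k)"

definition edge_regular ::
  "'a set \<Rightarrow> ('a \<Rightarrow> 'a \<Rightarrow> bool) \<Rightarrow> nat \<Rightarrow> nat \<Rightarrow> nat \<Rightarrow> bool" where
  "edge_regular V E n k lam \<longleftrightarrow> graph V E \<and> card V = n \<and> regular_graph V E k \<and>
     (\<forall>x\<in>V. \<forall>y\<in>V. E x y \<longrightarrow> card (nbrs V E x \<inter> nbrs V E y) = lam)"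

definition clique :: "'a set \<Rightarrow> ('a \<Rightarrow> 'a \<Rightarrow> bool) \<Rightarrow> 'a set \<Rightarrow> bool" where
  "clique V E C \<longleftrightarrow> C \<subseteq> V \<and> (\<forall>x\<in>C. \<forall>y\<in>C. x \<noteq> y \<longrightarrow> E x y)"

definition regular_clique :: "'a set \<Rightarrow> ('a \<Rightarrow> 'a \<Rightarrow> bool) \<Rightarrow> 'a set \<Rightarrow> nat \<Rightarrow> bool" where
  "regular_clique V E C a \<longleftrightarrow> clique V E C \<and>
     (\<forall>x\<in>V - C. card (nbrs V E x \<inter> C) = a)"

definition neumaier ::
  "'a set \<Rightarrow> ('a \<Rightarrow> 'a \<Rightarrow> bool) \<Rightarrow> nat \<Rightarrow> nat \<Rightarrow> nat \<Rightarrow> nat \<Rightarrow> nat \<Rightarrow> bool" where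
  "neumaier V E n k lam a c \<longleftrightarrow> edge_regular V E n k lam \<and> \<not> complete_graph V E \<and>
     (\<exists>C. regular_clique V E C a \<and> card C = c)"

definition strongly_regular ::
  "'a set \<Rightarrow> ('a \<Rightarrow> 'a \<Rightarrow> bool) \<Rightarrow> nat \<Rightarrow> nat \<Rightarrow> nat \<Rightarrow> nat \<Rightarrow> bool" where
  "strongly_regular V E n k lam mu \<longleftrightarrow> graph V E \<and> \<not> complete_graph V E \<and>
     card V = n \<and> regular_graph V E k \<and>
     (\<forall>x\<in>V. \<forall>y\<in>V. E x y \<longrightarrow> card (nbrs V E x \<inter> nbrs V E y) = lam) \<and>
     (\<forall>x\<in>V. \<forall>y\<in>V. x \<noteq> y \<and> \<not> E x y \<longrightarrow> card (nbrs V E x \<inter> nbrs V E y) = mu)"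

definition equitable_partition :: "'a set \<Rightarrow> ('a \<Rightarrow> 'a \<Rightarrow> bool) \<Rightarrow> 'a set set \<Rightarrow> bool" where
  "equitable_partition V E P \<longleftrightarrow> partition_on V P \<and>
     (\<forall>Vi\<in>P. \<forall>Vj\<in>P. \<forall>x\<in>Vi. \<forall>y\<in>Vi. card (nbrs V E x \<inter> Vj) = card (nbrs V E y \<inter> Vj))"

definition automorphism :: "'a set \<Rightarrow> ('a \<Rightarrow> 'a \<Rightarrow> bool) \<Rightarrow> ('a \<Rightarrow> 'a) \<Rightarrow> bool" where
  "automorphism V E f \<longleftrightarrow> bij_betw f V V \<and> (\<forall>u\<in>V. \<forall>v\<in>V. E u v \<longleftrightarrow> E (f u) (f v))"

definition vertex_transitive :: "'a set \<Rightarrow> ('a \<Rightarrow> 'a \<Rightarrow> bool) \<Rightarrow> bool" where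
  "vertex_transitive V E \<longleftrightarrow> (\<forall>x\<in>V. \<forall>y\<in>V. \<exists>f. automorphism V E f \<and> f x = y)"

text \<open>Graph distance: least length of a walk (E is only between vertices of V).\<close>
definition gdist :: "('a \<Rightarrow> 'a \<Rightarrow> bool) \<Rightarrow> 'a \<Rightarrow> 'a \<Rightarrow> nat" where
  "gdist E x y = (LEAST m. (E ^^ m) x y)"

definition diameter :: "'a set \<Rightarrow> ('a \<Rightarrow> 'a \<Rightarrow> bool) \<Rightarrow> nat" where
  "diameter V E = Max {gdist E x y | x y. x \<in> V \<and> y \<in> V}"

end

theory Submission
  imports Defs
begin

lemma card_split2:
  assumes "finite X" "A \<inter> B = {}"
  shows "card (X \<inter> (A \<union> B)) = card (X \<inter> A) + card (X \<inter> B)"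
proof -
  have "X \<inter> (A \<union> B) = (X \<inter> A) \<union> (X \<inter> B)" by blast
  moreover have "(X \<inter> A) \<inter> (X \<inter> B) = {}" using assms by blast
  ultimately show ?thesis using assms card_Un_disjoint by (metis finite_Int)
qed

lemma card_split4:
  assumes "finite X" "X \<subseteq> A \<union> B \<union> C \<union> D" "A \<inter> B = {}" "A \<inter> C = {}" "A \<inter> D = {}"
    "B \<inter> C = {}" "B \<inter> D = {}" "C \<inter> D = {}"
  shows "card X = card (X \<inter> A) + card (X \<inter> B) + card (X \<inter> C) + card (X \<inter> D)"
proof -
  have "X = X \<inter> (((A \<union> B) \<union> C) \<union> D)" using assms(2) by blast
  hence "card X = card (X \<inter> (((A \<union> B) \<union> C) \<union> D))" by simp
  also have "\<dots> = card (X \<inter> ((A \<union> B) \<union> C)) + card (X \<inter> D)"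
    using assms by (intro card_split2) auto
  also have "\<dots> = card (X \<inter> (A \<union> B)) + card (X \<inter> C) + card (X \<inter> D)"
    using assms by (subst card_split2) auto
  also have "\<dots> = card (X \<inter> A) + card (X \<inter> B) + card (X \<inter> C) + card (X \<inter> D)"
    using assms by (subst card_split2) auto
  finally show ?thesis .
qed

lemma eq4:
  fixes f g :: "'b \<Rightarrow> nat"
  assumes "Q \<in> {A, B, C, D}" "f A = g A" "f B = g B" "f C = g C"
    "f A + f B + f C + f D = g A + g B + g C + g D"
  shows "f Q = g Q"
  using assms by auto

lemma auto_nbrs:
  assumes "automorphism V E f" "x \<in> V"
  shows "nbrs V E (f x) = f ` nbrs V E x"
proof -
  have bp: "bij_betw f V V \<and> (\<forall>u\<in>V. \<forall>v\<in>V. E u v \<longleftrightarrow> E (f u) (f v))"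
    using assms(1) unfolding automorphism_def .
  have b: "bij_betw f V V" using bp by (rule conjunct1)
  have p: "\<forall>u\<in>V. \<forall>v\<in>V. E u v \<longleftrightarrow> E (f u) (f v)" using bp by (rule conjunct2)
  have img: "f ` V = V" using b by (simp add: bij_betw_def)
  show ?thesis
  proof
    show "nbrs V E (f x) \<subseteq> f ` nbrs V E x"
    proof
      fix y assume "y \<in> nbrs V E (f x)"
      hence y: "y \<in> V" "E (f x) y" unfolding nbrs_def by auto
      obtain z where z: "z \<in> V" "y = f z" using img y(1) by (metis imageE)
      have i: "E x z = E (f x) (f z)" using p[rule_format, OF assms(2) z(1)] .
      have "E x z" using y(2) z(2) i by simp
      hence "z \<in> nbrs V E x" using z(1) unfolding nbrs_def by simp
      thus "y \<in> f ` nbrs V E x" using z(2) by simp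
    qed
  next
    show "f ` nbrs V E x \<subseteq> nbrs V E (f x)"
    proof
      fix y assume "y \<in> f ` nbrs V E x"
      then obtain z where z: "z \<in> V" "E x z" "y = f z" unfolding nbrs_def by auto
      have i: "E x z = E (f x) (f z)" using p[rule_format, OF assms(2) z(1)] .
      have "E (f x) (f z)" using z(2) i by simp
      moreover have "f z \<in> V" using img z(1) by auto
      ultimately show "y \<in> nbrs V E (f x)" using z(3) unfolding nbrs_def by simp
    qed
  qed
qed

lemma auto_common:
  assumes "automorphism V E f" "x \<in> V" "y \<in> V"
  shows "card (nbrs V E (f x) \<inter> nbrs V E (f y)) = card (nbrs V E x \<inter> nbrs V E y)"
proof -
  have bp: "bij_betw f V V \<and> (\<forall>u\<in>V. \<forall>v\<in>V. E u v \<longleftrightarrow> E (f u) (f v))"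
    using assms(1) unfolding automorphism_def .
  have inj: "inj_on f V" using conjunct1[OF bp] by (rule bij_betw_imp_inj_on)
  have s: "nbrs V E x \<subseteq> V" "nbrs V E y \<subseteq> V" unfolding nbrs_def by auto
  have "nbrs V E (f x) \<inter> nbrs V E (f y) = f ` (nbrs V E x \<inter> nbrs V E y)"
    unfolding auto_nbrs[OF assms(1,2)] auto_nbrs[OF assms(1,3)] inj_on_image_Int[OF inj s] ..
  moreover have "inj_on f (nbrs V E x \<inter> nbrs V E y)" by (rule inj_on_subset[OF inj]) (use s in blast)
  ultimately show ?thesis by (simp add: card_image)
qed

lemma relpow2: "(E ^^ 2) x y \<longleftrightarrow> (\<exists>v. E x v \<and> E v y)"
  by (auto simp: numeral_2_eq_2 relcompp_apply)


theorem theorem3p3: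
  fixes V :: "'a set" and E :: "'a \<Rightarrow> 'a \<Rightarrow> bool"
    and n k lam a c :: nat and C :: "'a set" and e :: 'a
  assumes "neumaier V E n k lam a c"
    and "regular_clique V E C a"
    and "e \<in> C"
  defines "S \<equiv> nbrs V E e"
  shows
    "((\<exists>r. \<forall>x\<in>S - C. card (nbrs V E x \<inter> (S - C)) = r) \<and>
     ((\<exists>m. \<forall>x\<in>V - (S \<union> {e}). card (nbrs V E x \<inter> (S - C)) = m) \<longrightarrow>
        equitable_partition V E {{e}, C - {e}, S - C, V - (S \<union> {e})})) \<and>
    ((\<exists>n' k' lam' mu. strongly_regular V E n' k' lam' mu) \<longrightarrow>
       (\<exists>m. \<forall>x\<in>V - (S \<union> {e}). card (nbrs V E x \<inter> (S - C)) = m)) \<and>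
    (vertex_transitive V E \<longrightarrow>
       diameter V E = 2 \<and>
       ((\<exists>n' k' lam' mu. strongly_regular V E n' k' lam' mu) \<longleftrightarrow>
        (\<exists>m. \<forall>x\<in>V - (S \<union> {e}). card (nbrs V E x \<inter> (S - C)) = m)))"
proof -
  let ?N = "nbrs V E"
  define W where "W = V - (S \<union> {e})"
  from assms(1) have er: "edge_regular V E n k lam" and nc: "\<not> complete_graph V E"
    unfolding neumaier_def by auto
  hence g: "graph V E" and cardV: "card V = n" and rg: "regular_graph V E k"
    and reg: "\<And>x. x \<in> V \<Longrightarrow> card (?N x) = k"
    and lamc: "\<And>x y. x\<in>V \<Longrightarrow> y\<in>V \<Longrightarrow> E x y \<Longrightarrow> card (?N x \<inter> ?N y) = lam"
    unfolding edge_regular_def regular_graph_def by auto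
  from g have finV: "finite V" and EV: "\<And>x y. E x y \<Longrightarrow> x \<in> V \<and> y \<in> V"
    and Esym: "\<And>x y. E x y \<Longrightarrow> E y x" and Eirr: "\<And>x. \<not> E x x"
    and conn: "\<And>x y. x\<in>V \<Longrightarrow> y\<in>V \<Longrightarrow> E\<^sup>*\<^sup>* x y"
    unfolding graph_def by auto
  from assms(2) have CV: "C \<subseteq> V" and Ccl: "\<And>x y. x\<in>C \<Longrightarrow> y\<in>C \<Longrightarrow> x\<noteq>y \<Longrightarrow> E x y"
    and nex: "\<And>x. x \<in> V \<Longrightarrow> x \<notin> C \<Longrightarrow> card (?N x \<inter> C) = a"
    unfolding regular_clique_def clique_def by auto
  have eV: "e \<in> V" using assms(3) CV by auto
  have finN: "\<And>x. finite (?N x)" using finV unfolding nbrs_def by auto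
  have Nsub: "\<And>x. ?N x \<subseteq> V" unfolding nbrs_def by auto
  have memN: "\<And>x y. y \<in> ?N x \<longleftrightarrow> E x y" unfolding nbrs_def using EV by auto
  have finC: "finite C" using CV finV finite_subset by auto
  have CeS: "C - {e} \<subseteq> S" using Ccl assms(3) memN unfolding S_def by auto
  have eS: "e \<notin> S" unfolding S_def using memN Eirr by auto
  have SV: "S \<subseteq> V" unfolding S_def using Nsub by auto
  have memS: "\<And>x. x \<in> S \<longleftrightarrow> E e x" unfolding S_def using memN by auto
  have WV: "W \<subseteq> V" unfolding W_def by auto
  have memW: "\<And>x. x \<in> W \<longleftrightarrow> x \<in> V \<and> x \<noteq> e \<and> \<not> E e x" unfolding W_def using memS by auto
  have WC: "\<And>x. x \<in> W \<Longrightarrow> x \<notin> C" using CeS unfolding W_def by auto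

  have "C \<noteq> V"
  proof
    assume "C = V" then show False using nc Ccl unfolding complete_graph_def by auto
  qed
  then obtain w0 where w0: "w0 \<in> V" "w0 \<notin> C" using CV by auto
  have path: "E\<^sup>*\<^sup>* e w \<Longrightarrow> w \<notin> C \<Longrightarrow> \<exists>x y. x \<in> C \<and> y \<notin> C \<and> E x y" for w
  proof (induction rule: rtranclp_induct)
    case base thus ?case using assms(3) by auto
  next
    case (step y z) thus ?case by (cases "y \<in> C") auto
  qed
  from path[OF conn[OF eV w0(1)] w0(2)] obtain x y where xy: "x \<in> C" "y \<notin> C" "E x y" by auto
  hence "x \<in> ?N y \<inter> C" using memN Esym by auto
  hence "card (?N y \<inter> C) > 0" using finC by (metis card_gt_0_iff empty_iff finite_Int)
  hence a1: "a \<ge> 1" using nex[of y] xy EV by auto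

  have Wne: "W \<noteq> {}"
  proof
    assume "W = {}"
    hence "V - {e} \<subseteq> S" unfolding W_def by auto
    moreover have "S \<subseteq> V - {e}" using SV eS by auto
    ultimately have "S = V - {e}" by auto
    hence k1: "k = n - 1" using reg[OF eV] cardV eV finV S_def by (simp add: card_Diff_singleton)
    have "\<forall>x\<in>V. \<forall>y\<in>V. x \<noteq> y \<longrightarrow> E x y"
    proof (intro ballI impI)
      fix x y assume xy: "x\<in>V" "y\<in>V" "x\<noteq>y"
      have "?N x \<subseteq> V - {x}" using Nsub memN Eirr by auto
      moreover have "card (?N x) = card (V - {x})"
        using reg[OF xy(1)] k1 cardV finV xy(1) by (simp add: card_Diff_singleton)
      ultimately have "?N x = V - {x}" using finV by (metis card_subset_eq finite_Diff)
      thus "E x y" using memN xy by auto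
    qed
    thus False using nc unfolding complete_graph_def by auto
  qed

  have Cne: "C - {e} \<noteq> {}"
  proof
    assume "C - {e} = {}" hence Ce: "C = {e}" using assms(3) by auto
    from Wne obtain w where w: "w \<in> W" by auto
    hence "card (?N w \<inter> {e}) = a" using nex Ce WC WV by auto
    hence "e \<in> ?N w" using a1 by (cases "e \<in> ?N w") auto
    thus False using w memW memN Esym by auto
  qed

  have SCne: "S - C \<noteq> {}"
  proof
    assume "S - C = {}" hence SC: "S \<subseteq> C - {e}" using eS by auto
    from Wne obtain w where w: "w \<in> W" by auto
    have "card (?N w \<inter> C) = a" using nex w WC WV by auto
    hence "?N w \<inter> C \<noteq> {}" using a1 by auto
    then obtain y where y: "y \<in> C" "E w y" using memN by auto
    have "insert w (C - {y}) \<subseteq> ?N y" using Ccl memN Esym y by auto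
    hence "card (insert w (C - {y})) \<le> k" using reg[of y] y CV card_mono[OF finN] by fastforce
    moreover have "card (insert w (C - {y})) = card C"
      using finC y(1) WC[OF w] by (simp add: card_Diff_singleton card_gt_0_iff) (metis card_gt_0_iff empty_iff Suc_pred)
    moreover have "k \<le> card C - 1" using SC reg[OF eV] S_def finC assms(3)
      by (metis card_Diff_singleton card_mono finite_Diff)
    moreover have "card C > 0" using finC assms(3) by (auto simp: card_gt_0_iff)
    ultimately show False by arith
  qed

  have sum4: "k = card (?N x \<inter> {e}) + card (?N x \<inter> (C - {e})) + card (?N x \<inter> (S - C)) + card (?N x \<inter> W)"
    if x: "x \<in> V" for x
  proof -
    have "card (?N x) = card (?N x \<inter> {e}) + card (?N x \<inter> (C - {e})) + card (?N x \<inter> (S - C)) + card (?N x \<inter> W)"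
      apply (rule card_split4[OF finN])
      using Nsub[of x] eS CeS assms(3) unfolding W_def by (auto simp: eS)
    thus ?thesis using reg[OF x] by simp
  qed
  have splitS: "card (?N x \<inter> S) = card (?N x \<inter> (C - {e})) + card (?N x \<inter> (S - C))" for x
  proof -
    have "S = (C - {e}) \<union> (S - C)" using CeS eS by auto
    thus ?thesis using card_split2[OF finN, of "C - {e}" "S - C" x] by auto
  qed

  have pC: "card (?N x \<inter> {e}) = 1 \<and> card (?N x \<inter> (C - {e})) = card C - 2 \<and>
      card (?N x \<inter> (C - {e})) + card (?N x \<inter> (S - C)) = lam" if x: "x \<in> C - {e}" for x
  proof -
    have xV: "x \<in> V" and xe: "E x e" using x CV Ccl assms(3) by auto
    have "?N x \<inter> {e} = {e}" using xe memN by auto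
    moreover have "?N x \<inter> (C - {e}) = C - {e, x}" using x Ccl memN Eirr by auto
    moreover have "card (C - {e, x}) = card C - 2"
      using x assms(3) finC by (subst card_Diff_subset) auto
    moreover have "card (?N x \<inter> S) = lam" using lamc[OF xV eV xe] S_def by simp
    ultimately show ?thesis using splitS[of x] by simp
  qed
  have pS: "card (?N x \<inter> {e}) = 1 \<and> card (?N x \<inter> (C - {e})) + 1 = a \<and>
      card (?N x \<inter> (C - {e})) + card (?N x \<inter> (S - C)) = lam" if x: "x \<in> S - C" for x
  proof -
    have xV: "x \<in> V" and xe: "E x e" using x SV memS Esym by auto
    have "?N x \<inter> {e} = {e}" using xe memN by auto
    moreover have "?N x \<inter> C = insert e (?N x \<inter> (C - {e}))" using xe memN assms(3) by auto
    hence "card (?N x \<inter> C) = card (?N x \<inter> (C - {e})) + 1" using finN by simp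
    moreover have "card (?N x \<inter> C) = a" using nex xV x by auto
    moreover have "card (?N x \<inter> S) = lam" using lamc[OF xV eV xe] S_def by simp
    ultimately show ?thesis using splitS[of x] by simp
  qed
  have pW: "card (?N x \<inter> {e}) = 0 \<and> card (?N x \<inter> (C - {e})) = a" if x: "x \<in> W" for x
  proof -
    have xV: "x \<in> V" and xe: "\<not> E x e" using x memW Esym by auto
    have "?N x \<inter> {e} = {}" using xe memN by auto
    moreover have "?N x \<inter> (C - {e}) = ?N x \<inter> C" using xe memN by auto
    moreover have "card (?N x \<inter> C) = a" using nex xV WC x by auto
    ultimately show ?thesis by simp
  qed

  have part1: "\<exists>r. \<forall>x\<in>S - C. card (?N x \<inter> (S - C)) = r"
    using pS by (intro exI[of _ "lam + 1 - a"]) fastforce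

  have part1b: "equitable_partition V E {{e}, C - {e}, S - C, W}"
    if m: "\<forall>x\<in>W. card (?N x \<inter> (S - C)) = m" for m
  proof -
    have pon: "partition_on V {{e}, C - {e}, S - C, W}"
      unfolding partition_on_def disjoint_def
      using Cne SCne Wne eV CV SV eS CeS unfolding W_def by auto
    have eqp: "card (?N x \<inter> Q) = card (?N y \<inter> Q)"
      if Vi: "Vi \<in> {{e}, C - {e}, S - C, W}" and Q: "Q \<in> {{e}, C - {e}, S - C, W}"
        and x: "x \<in> Vi" and y: "y \<in> Vi" for Vi Q x y
    proof -
      let ?f = "\<lambda>Q. card (?N x \<inter> Q)" and ?g = "\<lambda>Q. card (?N y \<inter> Q)"
      have xV: "x \<in> V" and yV: "y \<in> V" using Vi x y eV CV SV WV by auto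
      have s: "?f {e} + ?f (C - {e}) + ?f (S - C) + ?f W = ?g {e} + ?g (C - {e}) + ?g (S - C) + ?g W"
        using sum4[OF xV] sum4[OF yV] by simp
      consider "Vi = {e}" | "Vi = C - {e}" | "Vi = S - C" | "Vi = W" using Vi by auto
      then show ?thesis
      proof cases
        case 1 thus ?thesis using x y by simp
      next
        case 2
        have "?f (S - C) = ?g (S - C)" using pC[of x] pC[of y] x y 2 by auto
        thus ?thesis by (intro eq4[OF Q _ _ _ s]) (use pC x y 2 in auto)
      next
        case 3
        have "?f (S - C) = ?g (S - C)" using pS[of x] pS[of y] x y 3 by auto
        thus ?thesis by (intro eq4[OF Q _ _ _ s]) (use pS x y 3 in auto)
      next
        case 4
        show ?thesis by (rule eq4[OF Q _ _ _ s]) (use pW m x y 4 in auto)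
      qed
    qed
    show ?thesis unfolding equitable_partition_def using pon eqp by blast
  qed

  have part2: "\<exists>m. \<forall>x\<in>W. card (?N x \<inter> (S - C)) = m"
    if "strongly_regular V E n' k' lam' mu" for n' k' lam' mu
  proof -
    have muc: "\<And>x y. x\<in>V \<Longrightarrow> y\<in>V \<Longrightarrow> x \<noteq> y \<and> \<not> E x y \<Longrightarrow> card (?N x \<inter> ?N y) = mu"
      using that unfolding strongly_regular_def by blast
    have "card (?N x \<inter> (S - C)) = mu - a" if x: "x \<in> W" for x
    proof -
      have "card (?N x \<inter> S) = mu" using muc[of x e] x memW Esym eV S_def by auto
      thus ?thesis using splitS[of x] pW[OF x] by simp
    qed
    thus ?thesis by blast
  qed

  have part3: "diameter V E = 2 \<and>
       ((\<exists>n' k' lam' mu. strongly_regular V E n' k' lam' mu) \<longleftrightarrow>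
        (\<exists>m. \<forall>x\<in>W. card (?N x \<inter> (S - C)) = m))" if vt: "vertex_transitive V E"
  proof -
    have vt': "\<And>x y. x \<in> V \<Longrightarrow> y \<in> V \<Longrightarrow> \<exists>f. automorphism V E f \<and> f x = y"
      using vt unfolding vertex_transitive_def by blast
    have d2: "\<exists>v. E u v \<and> E v w" if uw: "u\<in>V" "w\<in>V" "u\<noteq>w" "\<not> E u w" for u w
    proof -
      obtain g where ga: "automorphism V E g" and gw: "g w = e" using vt'[OF uw(2) eV] by blast
      have bp: "bij_betw g V V \<and> (\<forall>u\<in>V. \<forall>v\<in>V. E u v \<longleftrightarrow> E (g u) (g v))"
        using ga unfolding automorphism_def .
      have b: "bij_betw g V V" using bp by (rule conjunct1)
      have p: "\<forall>u\<in>V. \<forall>v\<in>V. E u v \<longleftrightarrow> E (g u) (g v)" using bp by (rule conjunct2)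
      have inj: "inj_on g V" and img: "g ` V = V" using b by (auto simp: bij_betw_def)
      have guV: "g u \<in> V" using img uw by auto
      have gue: "g u \<noteq> e" using inj uw gw inj_on_contraD by metis
      have gunE: "\<not> E (g u) e" using p uw gw by metis
      have "g u \<notin> C" using Ccl gue gunE assms(3) by auto
      hence "card (?N (g u) \<inter> C) = a" using nex guV by auto
      hence "?N (g u) \<inter> C \<noteq> {}" using a1 by auto
      then obtain v' where v': "v' \<in> C" "E (g u) v'" using memN by auto
      have v'e: "v' \<noteq> e" using v' gunE by auto
      have "v' \<in> V" using v' CV by auto
      then obtain v where v: "v \<in> V" "v' = g v" using img by auto
      have "E u v" using p uw v v' by metis
      moreover have "E v' e" using Ccl v' v'e assms(3) by auto
      hence "E v w" using p uw v gw by metis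
      ultimately show ?thesis by blast
    qed
    have gle: "gdist E x y \<le> 2" if "x \<in> V" "y \<in> V" for x y
    proof -
      have "(E ^^ 0) x y \<or> (E ^^ 1) x y \<or> (E ^^ 2) x y"
        using d2[OF that] relpow2[of E x y] by auto
      thus ?thesis unfolding gdist_def
        by (metis Least_le le_trans one_le_numeral zero_le)
    qed
    obtain x0 y0 where xy0: "x0 \<in> V" "y0 \<in> V" "x0 \<noteq> y0" "\<not> E x0 y0"
      using nc unfolding complete_graph_def by auto
    have "gdist E x0 y0 = 2"
    proof -
      have ex: "(E ^^ 2) x0 y0" using d2[OF xy0] relpow2 by metis
      have P: "(E ^^ gdist E x0 y0) x0 y0" unfolding gdist_def by (rule LeastI[where P="\<lambda>m. (E ^^ m) x0 y0", OF ex])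
      have "gdist E x0 y0 \<le> 2" using gle xy0 by auto
      moreover have "gdist E x0 y0 \<noteq> 0" using P xy0 by (metis relpowp.simps(1))
      moreover have "gdist E x0 y0 \<noteq> 1" using P xy0 by (metis relpowp_1)
      ultimately show ?thesis by linarith
    qed
    have sub: "{gdist E x y |x y. x \<in> V \<and> y \<in> V} \<subseteq> {..2}"
    proof
      fix z assume "z \<in> {gdist E x y |x y. x \<in> V \<and> y \<in> V}"
      then obtain x y where "z = gdist E x y" "x \<in> V" "y \<in> V" by blast
      thus "z \<in> {..2}" using gle by simp
    qed
    have mem: "gdist E x0 y0 \<in> {gdist E x y |x y. x \<in> V \<and> y \<in> V}" using xy0 by blast
    have diam: "diameter V E = 2" unfolding diameter_def
    proof (rule Max_eqI)
      show "finite {gdist E x y |x y. x \<in> V \<and> y \<in> V}"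
        by (rule finite_subset[OF sub]) simp
      show "\<And>z. z \<in> {gdist E x y |x y. x \<in> V \<and> y \<in> V} \<Longrightarrow> z \<le> 2" using sub by auto
      show "2 \<in> {gdist E x y |x y. x \<in> V \<and> y \<in> V}" using mem \<open>gdist E x0 y0 = 2\<close> by simp
    qed
    have bwd: "\<exists>n' k' lam' mu. strongly_regular V E n' k' lam' mu"
      if m: "\<forall>x\<in>W. card (?N x \<inter> (S - C)) = m" for m
    proof -
      have "card (?N x \<inter> ?N y) = a + m" if xy: "x\<in>V" "y\<in>V" "x \<noteq> y" "\<not> E x y" for x y
      proof -
        obtain f where fa: "automorphism V E f" and fx: "f x = e" using vt'[OF xy(1) eV] by blast
        have bp: "bij_betw f V V \<and> (\<forall>u\<in>V. \<forall>v\<in>V. E u v \<longleftrightarrow> E (f u) (f v))"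
          using fa unfolding automorphism_def .
        have b: "bij_betw f V V" using bp by (rule conjunct1)
        have p: "\<forall>u\<in>V. \<forall>v\<in>V. E u v \<longleftrightarrow> E (f u) (f v)" using bp by (rule conjunct2)
        have inj: "inj_on f V" and img: "f ` V = V" using b by (auto simp: bij_betw_def)
        have fyV: "f y \<in> V" using img xy by auto
        have fye: "f y \<noteq> e" using inj xy fx inj_on_contraD by metis
        have "\<not> E e (f y)" using p xy fx eV by metis
        hence fyW: "f y \<in> W" using memW fyV fye by auto
        have "card (?N x \<inter> ?N y) = card (?N (f y) \<inter> S)"
          using auto_common[OF fa xy(1,2)] fx S_def by (simp add: Int_commute)
        also have "\<dots> = a + m" using splitS[of "f y"] pW[OF fyW] m fyW by simp
        finally show ?thesis .
      qed
      hence "strongly_regular V E n k lam (a + m)"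
        unfolding strongly_regular_def using g nc cardV rg lamc by blast
      thus ?thesis by blast
    qed
    show ?thesis using diam bwd part2 by blast
  qed

  show ?thesis unfolding W_def[symmetric] using part1 part1b part2 part3 by blast
qed

end
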